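(* Let $P_{Y|X}$ be a BISO channel with output alphabet $\{0,\pm1,\dots,\pm l\}$ and transition probabilities $p_y=P_{Y|X}(y|0)=P_{Y|X}(-y|1)$. Then $$\eta_{KL}(P)=\sum_{y>0}\frac{(p_y-p_{-y})^2}{p_y+p_{-y}},$$ where summands with $p_y+p_{-y}=0$ are taken to be $0$.
   Context: A binary-input symmetric-output (BISO) channel is a channel $P_{Y|X}$ with input alphabet $\{0,1\}$ and finite output alphabet $\mathcal Y=\{0,\pm1,\dots,\pm l\}$ for some integer $l\ge 1$ (some transition probabilities may be zero), such that $P_{Y|X}(y|0)=P_{Y|X}(-y|1)=:p_y$ for all $y\in\mathcal Y$. For a channel $P=P_{Y|X}$ and an input distribution $P_X$, write $P\circ P_X$ for the induced output distribution. The KL contraction coefficient is $\eta_{KL}(P)=\sup_{P_X,Q_X}\frac{D(P\circ P_X\|P\circ Q_X)}{D(P_X\|Q_X)}$, the supremum over input distributions with $0<D(P_X\|Q_X)<\infty$, where $D$ is the Kullback–Leibler divergence. *)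

theory Defs
  imports "HOL-Analysis.Analysis"
begin

definition is_dist :: "'a set \<Rightarrow> ('a \<Rightarrow> real) \<Rightarrow> bool" where
  "is_dist A P \<longleftrightarrow> (\<forall>x\<in>A. 0 \<le> P x) \<and> sum P A = 1"

text \<open>Kullback--Leibler divergence of finite distributions (natural log; with the
conventions 0 log(0/q) = 0 and p log(p/0) = +infinity for p > 0).\<close>
definition KL :: "'a set \<Rightarrow> ('a \<Rightarrow> real) \<Rightarrow> ('a \<Rightarrow> real) \<Rightarrow> ereal" where
  "KL A P Q = (if \<exists>x\<in>A. P x > 0 \<and> Q x = 0 then \<infinity>
     else ereal (\<Sum>x\<in>{x\<in>A. P x > 0}. P x * ln (P x / Q x)))"

definition out_alph :: "nat \<Rightarrow> int set" where
  "out_alph l = {- int l .. int l}"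

definition in_alph :: "nat set" where
  "in_alph = {0, 1}"

definition biso_W :: "(int \<Rightarrow> real) \<Rightarrow> nat \<Rightarrow> int \<Rightarrow> real" where
  "biso_W p x y = (if x = 0 then p y else p (- y))"

definition is_biso :: "nat \<Rightarrow> (int \<Rightarrow> real) \<Rightarrow> bool" where
  "is_biso l p \<longleftrightarrow> l \<ge> 1 \<and> is_dist (out_alph l) p"

definition out_dist :: "(nat \<Rightarrow> int \<Rightarrow> real) \<Rightarrow> (nat \<Rightarrow> real) \<Rightarrow> int \<Rightarrow> real" where
  "out_dist W PX y = (\<Sum>x\<in>in_alph. PX x * W x y)"

definition eta_KL :: "nat \<Rightarrow> (nat \<Rightarrow> int \<Rightarrow> real) \<Rightarrow> ereal" where
  "eta_KL l W = Sup {KL (out_alph l) (out_dist W PX) (out_dist W QX) / KL in_alph PX QX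
      | PX QX. is_dist in_alph PX \<and> is_dist in_alph QX
              \<and> 0 < KL in_alph PX QX \<and> KL in_alph PX QX < \<infinity>}"

end

theory Submission
  imports Defs "HOL-Real_Asymp.Real_Asymp"
begin


lemma k_sign:
  fixes t :: real assumes "t > -1"
  shows "(t \<ge> 0 \<longrightarrow> ln (1+t) - t + t^2/2 \<ge> 0) \<and> (t \<le> 0 \<longrightarrow> ln (1+t) - t + t^2/2 \<le> 0)"
proof -
  have D: "DERIV (\<lambda>x. ln (1+x) - x + x^2/2) x :> x^2/(1+x)" if "x > -1" for x::real
  proof -
    have "DERIV (\<lambda>x. ln (1+x) - x + x^2/2) x :> 1/(1+x) - 1 + x"
      using that by (auto intro!: derivative_eq_intros)
    moreover have "1/(1+x) - 1 + x = x^2/(1+x)" using that by (simp add: field_simps power2_eq_square)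
    ultimately show ?thesis by simp
  qed
  show ?thesis
  proof (intro conjI impI)
    assume "t \<ge> 0"
    have "(\<lambda>x. ln (1+x) - x + x^2/2) 0 \<le> (\<lambda>x. ln (1+x) - x + x^2/2) t"
      by (rule DERIV_nonneg_imp_nondecreasing[OF \<open>t\<ge>0\<close>], rule exI, rule conjI, rule D) auto
    then show "ln (1+t) - t + t^2/2 \<ge> 0" by simp
  next
    assume "t \<le> 0"
    have "(\<lambda>x. ln (1+x) - x + x^2/2) t \<le> (\<lambda>x. ln (1+x) - x + x^2/2) 0"
      by (rule DERIV_nonneg_imp_nondecreasing[OF \<open>t\<le>0\<close>], rule exI, rule conjI, rule D) (use assms in auto)
    then show "ln (1+t) - t + t^2/2 \<le> 0" by simp
  qed
qed



lemma L1:
  fixes t :: real assumes "t > -1"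
  shows "t + t^2/2 - t^3/6 \<le> (1+t) * ln (1+t)"
proof -
  define h where "h = (\<lambda>x::real. (1+x) * ln (1+x) - x - x^2/2 + x^3/6)"
  have D: "DERIV h x :> ln (1+x) - x + x^2/2" if "x > -1" for x::real
  proof -
    have "DERIV h x :> 1 * ln (1+x) + (1+x) * (1/(1+x)) - 1 - (2*x)/2 + (3*x^2)/6"
      unfolding h_def using that 
      apply (auto intro!: derivative_eq_intros)
      done
    moreover have "1 * ln (1+x) + (1+x) * (1/(1+x)) - 1 - (2*x)/2 + (3*x^2)/6 = ln (1+x) - x + x^2/2" using that by simp
    ultimately show ?thesis by simp
  qed
  have "h 0 \<le> h t"
  proof (cases "t \<ge> 0")
    case True
    show ?thesis
    proof (rule DERIV_nonneg_imp_nondecreasing[of 0 t h, OF True])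
      fix x assume "0 \<le> x" "x \<le> t"
      then show "\<exists>y. DERIV h x :> y \<and> y \<ge> 0" using D[of x] k_sign[of x] by auto
    qed
  next
    case False
    show ?thesis
    proof (rule DERIV_nonpos_imp_nonincreasing[of t 0 h])
      show "t \<le> 0" using False by simp
      fix x assume "t \<le> x" "x \<le> 0"
      then show "\<exists>y. DERIV h x :> y \<and> y \<le> 0" using D[of x] k_sign[of x] assms by auto
    qed
  qed
  then show ?thesis unfolding h_def by simp
qed



lemma L2:
  fixes t :: real assumes "t > -1"
  shows "ln (1+t) \<le> t - t^2/2 + t^3/3"
proof -
  define h where "h = (\<lambda>x::real. x - x^2/2 + x^3/3 - ln (1+x))"
  have D: "DERIV h x :> x^3/(1+x)" if "x > -1" for x::real
  proof -
    have "DERIV h x :> 1 - x + x^2 - 1/(1+x)"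
      unfolding h_def using that apply (auto intro!: derivative_eq_intros)
      done
    moreover have "1 - x + x^2 - 1/(1+x) = x^3/(1+x)" using that by (simp add: field_simps power2_eq_square power3_eq_cube)
    ultimately show ?thesis by simp
  qed
  have "h 0 \<le> h t"
  proof (cases "t \<ge> 0")
    case True
    show ?thesis
    proof (rule DERIV_nonneg_imp_nondecreasing[of 0 t h, OF True])
      fix x :: real assume "0 \<le> x" "x \<le> t"
      then show "\<exists>y. DERIV h x :> y \<and> y \<ge> 0" using D[of x] by (intro exI[of _ "x^3/(1+x)"]) auto
    qed
  next
    case False
    show ?thesis
    proof (rule DERIV_nonpos_imp_nonincreasing[of t 0 h])
      show "t \<le> 0" using False by simp
      fix x :: real assume x: "t \<le> x" "x \<le> 0"
      have "(-x)^3 \<ge> 0" using x by simp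
      hence "x^3 \<le> 0" by simp
      moreover have "1 + x > 0" using x assms by simp
      ultimately show "\<exists>y. DERIV h x :> y \<and> y \<le> 0" using D[of x] x assms
        by (intro exI[of _ "x^3/(1+x)"]) (auto simp: divide_nonpos_pos)
    qed
  qed
  then show ?thesis unfolding h_def by simp
qed

lemma xlnx_lim: "((\<lambda>x::real. x * ln x) \<longlongrightarrow> 0) (at_right 0)"
  by real_asymp

lemma xlnx_cont: "continuous_on {0..} (\<lambda>t::real. t * ln t)"
  unfolding continuous_on_eq_continuous_within
proof
  fix x :: real assume "x \<in> {0..}"
  show "continuous (at x within {0..}) (\<lambda>t::real. t * ln t)"
  proof (cases "x = 0")
    case True
    then show ?thesis unfolding continuous_within using xlnx_lim by (simp add: at_within_Ici_at_right)
  next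
    case False
    with \<open>x \<in> {0..}\<close> have "x > 0" by simp
    then have "isCont (\<lambda>t::real. t * ln t) x" by (auto intro!: continuous_intros)
    then show ?thesis using continuous_at_imp_continuous_at_within by blast
  qed
qed

definition phi :: "real \<Rightarrow> real \<Rightarrow> real" where
  "phi u v = u * ln (u / v)"

lemma phi_same[simp]: "phi v v = 0"
  unfolding phi_def by (cases "v = 0") auto

lemma phi_zero[simp]: "phi 0 v = 0"
  unfolding phi_def by simp

lemma phi_cont:
  assumes "k > 0" "continuous_on S g" "\<And>x. x \<in> S \<Longrightarrow> g x \<ge> 0"
  shows "continuous_on S (\<lambda>x. phi (g x) k)"
proof -
  have eq: "phi (g x) k = g x * ln (g x) - g x * ln k" if "x \<in> S" for x
  proof (cases "g x = 0")
    case False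
    with assms(3)[OF that] have "g x > 0" by simp
    then show ?thesis unfolding phi_def using assms(1) by (simp add: ln_div algebra_simps)
  qed (simp add: phi_def)
  have c1: "continuous_on S (\<lambda>x. g x * ln (g x))"
    using continuous_on_compose2[OF xlnx_cont assms(2)] assms(3) by auto
  have "continuous_on S (\<lambda>x. g x * ln (g x) - g x * ln k)"
    by (intro continuous_intros c1 assms(2))
  moreover have "continuous_on S (\<lambda>x. phi (g x) k) = continuous_on S (\<lambda>x. g x * ln (g x) - g x * ln k)"
    by (rule continuous_on_cong) (auto simp: eq)
  ultimately show ?thesis by simp
qed

lemma phi_deriv:
  assumes "u > 0" "k > 0" "(f has_real_derivative f') (at z)" "f z = u"
  shows "((\<lambda>z. phi (f z) k) has_real_derivative f' * (ln (u/k) + 1)) (at z)"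
proof -
  have "((\<lambda>z. f z * ln (f z / k)) has_real_derivative f' * ln (f z / k) + f z * (f' / k / (f z / k))) (at z)"
    using assms by (auto intro!: derivative_eq_intros)
  moreover have "f' * ln (f z / k) + f z * (f' / k / (f z / k)) = f' * (ln (u/k) + 1)"
    using assms by (simp add: field_simps)
  ultimately show ?thesis unfolding phi_def by simp
qed

lemma lnq_deriv:
  assumes "u > 0" "k > 0" "(f has_real_derivative f') (at z)" "f z = u"
  shows "((\<lambda>z. ln (f z / k)) has_real_derivative f' / u) (at z)"
proof -
  have "((\<lambda>z. ln (f z / k)) has_real_derivative (f' / k) / (f z / k)) (at z)"
    using assms by (auto intro!: derivative_eq_intros)
  moreover have "(f' / k) / (f z / k) = f' / u"
    using assms by (simp add: field_simps)
  ultimately show ?thesis by simp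
qed




lemma lin_pos:
  fixes a b z :: real
  assumes "a \<ge> 0" "b \<ge> 0" "a + b > 0" "0 < z" "z < 1"
  shows "z*a + (1-z)*b > 0"
proof (cases "a > 0")
  case True
  then have "z*a > 0" using assms by simp
  moreover have "(1-z)*b \<ge> 0" using assms by simp
  ultimately show ?thesis by linarith
next
  case False
  then have "b > 0" using assms by simp
  then have "(1-z)*b > 0" using assms by simp
  moreover have "z*a \<ge> 0" using assms by simp
  ultimately show ?thesis by linarith
qed

lemma core:
  fixes a b r x :: real
  assumes ab: "a \<ge> 0" "b \<ge> 0" and r: "0 < r" "r < 1" and x: "0 \<le> x" "x \<le> 1"
  shows "phi (x*a+(1-x)*b) (r*a+(1-r)*b) + phi (x*b+(1-x)*a) (r*b+(1-r)*a)
         \<le> (a-b)^2/(a+b) * (phi x r + phi (1-x) (1-r))"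
proof (cases "a + b = 0")
  case True
  then have "a = 0" "b = 0" using ab by auto
  then show ?thesis by simp
next
  case False
  then have s: "a + b > 0" using ab by simp
  define A where "A = (\<lambda>z::real. z*a+(1-z)*b)"
  define B where "B = (\<lambda>z::real. z*b+(1-z)*a)"
  define c where "c = (a-b)^2/(a+b)"
  have Apos: "A z > 0" if "0 < z" "z < 1" for z unfolding A_def using lin_pos[OF ab s that] .
  have Bpos: "B z > 0" if "0 < z" "z < 1" for z unfolding B_def using lin_pos[OF ab(2,1) _ that] s by simp
  have Anon: "A z \<ge> 0" if "0 \<le> z" "z \<le> 1" for z unfolding A_def using that ab by simp
  have Bnon: "B z \<ge> 0" if "0 \<le> z" "z \<le> 1" for z unfolding B_def using that ab by simp
  define F where "F = (\<lambda>z. c * (phi z r + phi (1-z) (1-r)) - phi (A z) (A r) - phi (B z) (B r))"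
  define G where "G = (\<lambda>z. c * (ln (z/r) - ln ((1-z)/(1-r))) - (a-b) * (ln (A z / A r) - ln (B z / B r)))"
  define H where "H = (\<lambda>z. c * (1/z + 1/(1-z)) - (a-b) * ((a-b) / A z + (a-b) / B z))"
  have dA: "(A has_real_derivative (a-b)) (at z)" for z
    unfolding A_def by (auto intro!: derivative_eq_intros simp: algebra_simps)
  have dB: "(B has_real_derivative (b-a)) (at z)" for z
    unfolding B_def by (auto intro!: derivative_eq_intros simp: algebra_simps)
  have d1: "((\<lambda>z::real. z) has_real_derivative 1) (at z)" for z by (auto intro!: derivative_eq_intros)
  have d2: "((\<lambda>z::real. 1 - z) has_real_derivative -1) (at z)" for z by (auto intro!: derivative_eq_intros)
  have DF: "DERIV F z :> G z" if z: "0 < z" "z < 1" for z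
  proof -
    have e1: "((\<lambda>z. phi z r) has_real_derivative 1 * (ln (z/r) + 1)) (at z)"
      by (rule phi_deriv[OF _ _ d1]) (use z r in auto)
    have e2: "((\<lambda>z. phi (1-z) (1-r)) has_real_derivative (-1) * (ln ((1-z)/(1-r)) + 1)) (at z)"
      by (rule phi_deriv[OF _ _ d2]) (use z r in auto)
    have e3: "((\<lambda>z. phi (A z) (A r)) has_real_derivative (a-b) * (ln (A z/A r) + 1)) (at z)"
      by (rule phi_deriv[OF _ _ dA]) (use z r Apos in auto)
    have e4: "((\<lambda>z. phi (B z) (B r)) has_real_derivative (b-a) * (ln (B z/B r) + 1)) (at z)"
      by (rule phi_deriv[OF _ _ dB]) (use z r Bpos in auto)
    have "DERIV F z :> c * (1 * (ln (z/r) + 1) + (-1) * (ln ((1-z)/(1-r)) + 1))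
           - (a-b) * (ln (A z / A r) + 1) - (b-a) * (ln (B z / B r) + 1)"
      unfolding F_def by (intro DERIV_diff DERIV_cmult DERIV_add e1 e2 e3 e4)
    then show ?thesis unfolding G_def by (simp add: algebra_simps)
  qed
  have DG: "DERIV G z :> H z" if z: "0 < z" "z < 1" for z
  proof -
    have e1: "((\<lambda>z. ln (z/r)) has_real_derivative 1 / z) (at z)"
      by (rule lnq_deriv[OF _ _ d1]) (use z r in auto)
    have e2: "((\<lambda>z. ln ((1-z)/(1-r))) has_real_derivative (-1) / (1-z)) (at z)"
      by (rule lnq_deriv[OF _ _ d2]) (use z r in auto)
    have e3: "((\<lambda>z. ln (A z/A r)) has_real_derivative (a-b) / A z) (at z)"
      by (rule lnq_deriv[OF _ _ dA]) (use z r Apos in auto)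
    have e4: "((\<lambda>z. ln (B z/B r)) has_real_derivative (b-a) / B z) (at z)"
      by (rule lnq_deriv[OF _ _ dB]) (use z r Bpos in auto)
    have "DERIV G z :> c * (1 / z - (-1) / (1-z)) - (a-b) * ((a-b) / A z - (b-a) / B z)"
      unfolding G_def by (intro DERIV_diff DERIV_cmult e1 e2 e3 e4)
    moreover have "(b-a)/B z = -((a-b)/B z)" by (metis minus_diff_eq minus_divide_left)
    ultimately show ?thesis unfolding H_def by (simp add: algebra_simps)
  qed
  have Hnn: "H z \<ge> 0" if z: "0 < z" "z < 1" for z
  proof -
    have Az: "A z > 0" and Bz: "B z > 0" using Apos Bpos z by auto
    have key: "A z * B z - (a+b)^2 * (z*(1-z)) = a*b*(2*z-1)^2"
      unfolding A_def B_def by (simp add: algebra_simps power2_eq_square)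
    have sAB: "A z + B z = a + b" unfolding A_def B_def by (simp add: algebra_simps)
    have w: "z*(1-z) > 0" using z by simp
    have h1: "1/z + 1/(1-z) = 1/(z*(1-z))" using z by (simp add: field_simps)
    have h2: "(a-b)/A z + (a-b)/B z = (a-b)*(a+b)/(A z*B z)"
    proof -
      have "(a-b)/A z + (a-b)/B z = (a-b)*(A z + B z)/(A z*B z)" using Az Bz by (simp add: field_simps)
      then show ?thesis by (simp add: sAB)
    qed
    have gen: "dd/ss * (1/ww) - ee * (ee * ss / pp) = dd*(pp - ss^2 * ww)/(ss * ww * pp)" if "ss>0" "ww>0" "pp>0" "dd = ee^2" for dd ee ss ww pp :: real
      using that by (simp add: field_simps power2_eq_square)
    have "H z = (a-b)^2 * (A z * B z - (a+b)^2 * (z*(1-z))) / ((a+b) * (z*(1-z)) * (A z * B z))"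
      unfolding H_def c_def h1 h2 by (rule gen) (use s w Az Bz in auto)
    also have "\<dots> \<ge> 0" unfolding key using z s Az Bz ab by (intro divide_nonneg_pos) auto
    finally show ?thesis .
  qed
  have Gmono: "G u \<le> G v" if "0 < u" "u \<le> v" "v < 1" for u v
  proof (rule DERIV_nonneg_imp_nondecreasing[of u v G, OF that(2)])
    fix y assume "u \<le> y" "y \<le> v"
    then have "0 < y" "y < 1" using that by auto
    then show "\<exists>g. DERIV G y :> g \<and> g \<ge> 0" using DG Hnn by blast
  qed
  have Gr: "G r = 0" unfolding G_def using r Apos[OF r] Bpos[OF r] by simp
  have Fr: "F r = 0" unfolding F_def by simp
  have contF: "continuous_on {0..1} F"
    unfolding F_def
    by (intro continuous_intros phi_cont) (use r Apos[OF r] Bpos[OF r] Anon Bnon in \<open>auto simp: A_def B_def intro!: continuous_intros\<close>)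
  have "F r \<le> F x"
  proof (cases "r \<le> x")
    case True
    show ?thesis
    proof (rule DERIV_nonneg_imp_increasing_open[of r x F, OF True])
      show "continuous_on {r..x} F" using contF by (rule continuous_on_subset) (use r x in auto)
    next
      fix y assume y: "r < y" "y < x"
      then have "G y \<ge> 0" using Gmono[of r y] Gr r x by auto
      then show "\<exists>g. DERIV F y :> g \<and> g \<ge> 0" using DF[of y] y r x by auto
    qed
  next
    case False
    show ?thesis
    proof (rule DERIV_nonpos_imp_decreasing_open[of x r F])
      show "x \<le> r" using False by simp
      show "continuous_on {x..r} F" using contF by (rule continuous_on_subset) (use r x in auto)
    next
      fix y assume y: "x < y" "y < r"
      then have "G y \<le> 0" using Gmono[of y r] Gr r x by auto
      then show "\<exists>g. DERIV F y :> g \<and> g \<le> 0" using DF[of y] y r x by auto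
    qed
  qed
  then have "F x \<ge> 0" using Fr by simp
  then show ?thesis unfolding F_def A_def B_def c_def by simp
qed




lemma KL_eq:
  assumes "finite A" "\<And>x. x \<in> A \<Longrightarrow> P x \<ge> 0" "\<And>x. x \<in> A \<Longrightarrow> P x > 0 \<Longrightarrow> Q x > 0"
  shows "KL A P Q = ereal (\<Sum>x\<in>A. phi (P x) (Q x))"
proof -
  have c: "\<not> (\<exists>x\<in>A. P x > 0 \<and> Q x = 0)"
  proof
    assume "\<exists>x\<in>A. P x > 0 \<and> Q x = 0"
    then obtain x where "x \<in> A" "P x > 0" "Q x = 0" by blast
    then show False using assms(3)[of x] by simp
  qed
  have z: "P i * ln (P i / Q i) = 0" if "i \<in> A - {x \<in> A. 0 < P x}" for i
  proof -
    have "P i = 0" using that assms(2)[of i] by simp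
    then show ?thesis by simp
  qed
  have "(\<Sum>x\<in>{x\<in>A. P x > 0}. P x * ln (P x / Q x)) = (\<Sum>x\<in>A. P x * ln (P x / Q x))"
    by (rule sum.mono_neutral_left) (use assms(1) z in auto)
  then show ?thesis unfolding KL_def phi_def using c by simp
qed


lemma KL_self:
  assumes "\<And>x. x \<in> A \<Longrightarrow> P x = Q x"
  shows "KL A P Q = 0"
proof -
  have c: "\<not> (\<exists>x\<in>A. P x > 0 \<and> Q x = 0)"
  proof
    assume "\<exists>x\<in>A. P x > 0 \<and> Q x = 0"
    then obtain x where "x \<in> A" "P x > 0" "Q x = 0" by blast
    then show False using assms[of x] by simp
  qed
  have "(\<Sum>x\<in>{x\<in>A. P x > 0}. P x * ln (P x / Q x)) = 0"
    by (rule sum.neutral) (use assms in auto)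
  then show ?thesis unfolding KL_def using c by (simp add: zero_ereal_def)
qed


lemma sum_sym:
  "(\<Sum>y\<in>{-int l..int l}. g y) = g 0 + (\<Sum>y\<in>{1..int l}. g y + g (-y))"
proof (induction l)
  case 0
  then show ?case by simp
next
  case (Suc l)
  have e1: "{-int (Suc l)..int (Suc l)} = insert (int l+1) (insert (-(int l+1)) {-int l..int l})" by auto
  have e2: "{1..int (Suc l)} = insert (int l+1) {1..int l}" by auto
  have "(\<Sum>y\<in>{-int (Suc l)..int (Suc l)}. g y) = g (int l+1) + (g (-(int l+1)) + (\<Sum>y\<in>{-int l..int l}. g y))"
    unfolding e1 by (subst sum.insert; simp)+
  moreover have "(\<Sum>y\<in>{1..int (Suc l)}. g y + g (-y)) = (g (int l+1) + g (-(int l+1))) + (\<Sum>y\<in>{1..int l}. g y + g (-y))"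
    unfolding e2 by (subst sum.insert; simp)
  ultimately show ?case using Suc by (simp add: algebra_simps)
qed


lemma sum_in_alph: "sum f in_alph = f 0 + f 1" by (simp add: in_alph_def)
lemma out_dist_eq:
  assumes "is_dist in_alph PX"
  shows "out_dist (biso_W p) PX y = PX 0 * p y + (1 - PX 0) * p (-y)"
proof -
  have "PX 0 + PX 1 = 1" using assms unfolding is_dist_def sum_in_alph by simp
  then have "PX 1 = 1 - PX 0" by simp
  then show ?thesis unfolding out_dist_def sum_in_alph biso_W_def by simp
qed


lemma termT:
  fixes a b e :: real
  assumes "a \<ge> 0" "\<bar>b\<bar> \<le> 2*a" "0 < e" "e \<le> 1/4"
  shows "phi (a + e*b) a \<ge> e*b + e^2*(1/2 - e/3)*(b^2/a)"
proof (cases "a = 0")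
  case True
  then have "b = 0" using assms by simp
  then show ?thesis using True by simp
next
  case False
  then have a: "a > 0" using assms by simp
  define t where "t = e*b/a"
  have tb: "\<bar>t\<bar> \<le> 2*e"
  proof -
    have "\<bar>t\<bar> = e*\<bar>b\<bar>/a" unfolding t_def using a assms by (simp add: abs_mult)
    also have "\<dots> \<le> e*(2*a)/a" using assms a by (intro divide_right_mono mult_left_mono) auto
    finally show ?thesis using a by simp
  qed
  have tgt: "t > -1" using tb assms by linarith
  have eq1: "a + e*b = a*(1+t)" unfolding t_def using a by (simp add: field_simps)
  have "phi (a + e*b) a = a * ((1+t) * ln (1+t))" unfolding phi_def eq1 using a by simp
  also have "\<dots> \<ge> a * (t + t^2/2 - t^3/6)" using L1[OF tgt] a by (intro mult_left_mono) auto
  finally have s1: "phi (a + e*b) a \<ge> a * (t + t^2/2 - t^3/6)" .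
  have "t^3 = t * t^2" by (simp add: power3_eq_cube power2_eq_square)
  also have "\<dots> \<le> \<bar>t\<bar> * t^2" by (intro mult_right_mono) auto
  also have "\<dots> \<le> 2*e*t^2" using tb by (intro mult_right_mono) auto
  finally have "t^3 \<le> 2*e*t^2" .
  then have "a * (t + t^2/2 - t^3/6) \<ge> a * (t + t^2*(1/2 - e/3))" using a
    by (intro mult_left_mono) (auto simp: algebra_simps)
  moreover have "a * (t + t^2*(1/2 - e/3)) = e*b + e^2*(1/2 - e/3)*(b^2/a)"
    unfolding t_def using a by (simp add: field_simps power2_eq_square)
  ultimately show ?thesis using s1 by linarith
qed





lemma biso_facts:
  assumes "is_biso l p"
  shows "\<And>y. y \<in> out_alph l \<Longrightarrow> p y \<ge> 0" "\<And>y. y \<in> out_alph l \<Longrightarrow> -y \<in> out_alph l"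
    "\<And>y. y \<in> {1..int l} \<Longrightarrow> y \<in> out_alph l" "finite (out_alph l)"
  using assms unfolding is_biso_def is_dist_def out_alph_def by auto

lemma upper:
  assumes biso: "is_biso l p" and PX: "is_dist in_alph PX" and QX: "is_dist in_alph QX"
    and pos: "0 < KL in_alph PX QX" and fin: "KL in_alph PX QX < \<infinity>"
  shows "KL (out_alph l) (out_dist (biso_W p) PX) (out_dist (biso_W p) QX) / KL in_alph PX QX
         \<le> ereal (\<Sum>y\<in>{1..int l}. (p y - p (- y))^2 / (p y + p (- y)))"
proof -
  define S where "S = (\<Sum>y\<in>{1..int l}. (p y - p (- y))^2 / (p y + p (- y)))"
  define x where "x = PX 0"
  define r where "r = QX 0"
  have P1: "PX 1 = 1 - x" using PX unfolding x_def is_dist_def sum_in_alph by simp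
  have Q1: "QX 1 = 1 - r" using QX unfolding r_def is_dist_def sum_in_alph by simp
  have x0: "x \<ge> 0" "1 - x \<ge> 0" using PX P1 unfolding x_def is_dist_def in_alph_def by auto
  have r0: "r \<ge> 0" "1 - r \<ge> 0" using QX Q1 unfolding r_def is_dist_def in_alph_def by auto
  have rpos: "r > 0"
  proof (rule ccontr)
    assume "\<not> r > 0"
    then have r: "r = 0" using r0 by simp
    show False
    proof (cases "x > 0")
      case True
      then have "\<exists>y\<in>in_alph. PX y > 0 \<and> QX y = 0" using r unfolding x_def r_def in_alph_def by auto
      then have "KL in_alph PX QX = \<infinity>" unfolding KL_def by simp
      then show False using fin by simp
    next
      case False
      then have "x = 0" using x0 by simp
      then have "KL in_alph PX QX = 0" using r P1 Q1 by (intro KL_self) (auto simp: in_alph_def x_def r_def)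
      then show False using pos by simp
    qed
  qed
  have rlt: "r < 1"
  proof (rule ccontr)
    assume "\<not> r < 1"
    then have r: "r = 1" using r0 by simp
    show False
    proof (cases "x < 1")
      case True
      then have "\<exists>y\<in>in_alph. PX y > 0 \<and> QX y = 0" using r P1 Q1 unfolding in_alph_def by auto
      then have "KL in_alph PX QX = \<infinity>" unfolding KL_def by simp
      then show False using fin by simp
    next
      case False
      then have "x = 1" using x0 by simp
      then have "KL in_alph PX QX = 0" using r P1 Q1 by (intro KL_self) (auto simp: in_alph_def x_def r_def)
      then show False using pos by simp
    qed
  qed
  define Din where "Din = phi x r + phi (1-x) (1-r)"
  have KLin: "KL in_alph PX QX = ereal Din"
    by (subst KL_eq) (use x0 r0 rpos rlt P1 Q1 in \<open>auto simp: in_alph_def Din_def x_def r_def\<close>)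
  have Dpos: "Din > 0" using pos KLin by simp
  note bf = biso_facts[OF biso]
  define PW where "PW = (\<lambda>y. x * p y + (1 - x) * p (-y))"
  define QW where "QW = (\<lambda>y. r * p y + (1 - r) * p (-y))"
  have odP: "out_dist (biso_W p) PX = PW" unfolding PW_def x_def using out_dist_eq[OF PX] by auto
  have odQ: "out_dist (biso_W p) QX = QW" unfolding QW_def r_def using out_dist_eq[OF QX] by auto
  have PWnn: "PW y \<ge> 0" if "y \<in> out_alph l" for y
    unfolding PW_def using x0 bf(1)[OF that] bf(1)[OF bf(2)[OF that]] by simp
  have QWpos: "QW y > 0" if "y \<in> out_alph l" "PW y > 0" for y
  proof -
    have a: "p y \<ge> 0" "p (-y) \<ge> 0" using bf(1)[OF that(1)] bf(1)[OF bf(2)[OF that(1)]] by auto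
    show ?thesis
    proof (cases "p y > 0")
      case True
      then have "r * p y > 0" using rpos by simp
      moreover have "(1-r) * p (-y) \<ge> 0" using a r0 by simp
      ultimately show ?thesis unfolding QW_def by linarith
    next
      case False
      then have "p y = 0" using a by simp
      then have "p (-y) > 0" using that(2) a unfolding PW_def by (cases "p (-y) = 0") auto
      then have "(1-r) * p (-y) > 0" using rlt by simp
      moreover have "r * p y \<ge> 0" using a r0 by simp
      ultimately show ?thesis unfolding QW_def by linarith
    qed
  qed
  define Dout where "Dout = (\<Sum>y\<in>out_alph l. phi (PW y) (QW y))"
  have KLout: "KL (out_alph l) PW QW = ereal Dout"
    unfolding Dout_def by (rule KL_eq) (use bf(4) PWnn QWpos in auto)
  have "Dout = phi (PW 0) (QW 0) + (\<Sum>y\<in>{1..int l}. phi (PW y) (QW y) + phi (PW (-y)) (QW (-y)))"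
    unfolding Dout_def out_alph_def by (rule sum_sym)
  also have "phi (PW 0) (QW 0) = 0"
  proof -
    have "PW 0 = p 0" "QW 0 = p 0" unfolding PW_def QW_def by (simp_all add: algebra_simps)
    then show ?thesis by simp
  qed
  also have "(\<Sum>y\<in>{1..int l}. phi (PW y) (QW y) + phi (PW (-y)) (QW (-y)))
      \<le> (\<Sum>y\<in>{1..int l}. (p y - p (- y))^2 / (p y + p (- y)) * Din)"
  proof (rule sum_mono)
    fix y assume y: "y \<in> {1..int l}"
    have a: "p y \<ge> 0" "p (-y) \<ge> 0" using bf(1)[OF bf(3)[OF y]] bf(1)[OF bf(2)[OF bf(3)[OF y]]] by auto
    show "phi (PW y) (QW y) + phi (PW (-y)) (QW (-y)) \<le> (p y - p (- y))^2 / (p y + p (- y)) * Din"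
      using core[OF a rpos rlt x0(1)] x0(2) unfolding PW_def QW_def Din_def by (simp add: algebra_simps)
  qed
  also have "\<dots> = S * Din" unfolding S_def by (simp add: sum_distrib_right)
  finally have "Dout \<le> S * Din" by simp
  then have "Dout / Din \<le> S" using Dpos by (simp add: pos_divide_le_eq)
  then show ?thesis unfolding odP odQ KLout KLin S_def[symmetric] using Dpos by simp
qed



lemma phi_half: "phi u (1/2) = u * ln (2*u)"
  unfolding phi_def by (simp add: field_simps)

lemma lower:
  assumes biso: "is_biso l p" and e: "0 < e" "e \<le> 1/4"
  shows "ereal ((\<Sum>y\<in>{1..int l}. (p y - p (- y))^2 / (p y + p (- y))) * (1 - 2*e)) \<le> eta_KL l (biso_W p)"
proof -
  define S where "S = (\<Sum>y\<in>{1..int l}. (p y - p (- y))^2 / (p y + p (- y)))"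
  note bf = biso_facts[OF biso]
  define PX where "PX = (\<lambda>x::nat. if x = 0 then 1/2 + e else 1/2 - e)"
  define QX where "QX = (\<lambda>x::nat. (1/2::real))"
  have dP: "is_dist in_alph PX" unfolding is_dist_def PX_def sum_in_alph using e by (auto simp: in_alph_def)
  have dQ: "is_dist in_alph QX" unfolding is_dist_def QX_def sum_in_alph by (auto simp: in_alph_def)
  define t where "t = 2*e"
  have t: "0 < t" "t \<le> 1/2" using e unfolding t_def by auto
  define Din where "Din = ((1+t) * ln (1+t) + (1 + (-t)) * ln (1 + (-t))) / 2"
  have KLin: "KL in_alph PX QX = ereal Din"
  proof (subst KL_eq)
    show "ereal (\<Sum>x\<in>in_alph. phi (PX x) (QX x)) = ereal Din"
    proof -
      have h1: "(1/2+e) = (1+t)/2" "(1/2-e) = (1+(-t))/2" unfolding t_def by simp_all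
      have h2: "phi ((1+s)/2) (1/2) = (1+s)/2 * ln (1+s)" for s :: real
      proof -
        have q: "((1+s)/2) / (1/2) = 1+s" by simp
        show ?thesis unfolding phi_def q ..
      qed
      show ?thesis unfolding sum_in_alph PX_def QX_def Din_def
        by (simp only: h1 h2 if_True if_False one_neq_zero) (simp add: h2[of t] field_simps)
    qed
  qed (use e in \<open>auto simp: in_alph_def PX_def QX_def\<close>)
  have Dlow: "Din \<ge> t^2/2"
  proof -
    have "(1+t) * ln (1+t) \<ge> t + t^2/2 - t^3/6" using L1[of t] t by simp
    moreover have "(1 + (-t)) * ln (1 + (-t)) \<ge> (-t) + (-t)^2/2 - (-t)^3/6" using L1[of "-t"] t by simp
    ultimately show ?thesis unfolding Din_def by (simp add: power3_eq_cube power2_eq_square)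
  qed
  have "t^2 > 0" using t by simp
  then have Dpos: "Din > 0" using Dlow by linarith
  have Dup: "Din \<le> t^2/2 + t^4/3"
  proof -
    have "(1+t) * ln (1+t) \<le> (1+t) * (t - t^2/2 + t^3/3)" using L2[of t] t by (intro mult_left_mono) auto
    moreover have "(1 + (-t)) * ln (1 + (-t)) \<le> (1 + (-t)) * ((-t) - (-t)^2/2 + (-t)^3/3)"
      using L2[of "-t"] t by (intro mult_left_mono) auto
    ultimately show ?thesis unfolding Din_def by (simp add: power3_eq_cube power2_eq_square power4_eq_xxxx field_simps)
  qed
  define a where "a = (\<lambda>y. (p y + p (-y)) / 2)"
  define b where "b = (\<lambda>y. p y - p (-y))"
  have odP: "out_dist (biso_W p) PX = (\<lambda>y. a y + e * b y)"
    using out_dist_eq[OF dP] unfolding PX_def a_def b_def by (auto simp: algebra_simps)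
  have odQ: "out_dist (biso_W p) QX = a"
    using out_dist_eq[OF dQ] unfolding QX_def a_def by (auto simp: algebra_simps)
  have ab: "a y \<ge> 0" "\<bar>b y\<bar> \<le> 2 * a y" if "y \<in> out_alph l" for y
    using bf(1)[OF that] bf(1)[OF bf(2)[OF that]] unfolding a_def b_def by (auto split: abs_split)
  have PWnn: "a y + e * b y \<ge> 0" if "y \<in> out_alph l" for y
  proof -
    have "e * \<bar>b y\<bar> \<le> (1/4) * (2 * a y)" using ab[OF that] e by (intro mult_mono) auto
    moreover have "- (e * b y) \<le> e * \<bar>b y\<bar>"
    proof -
      have "- b y \<le> \<bar>b y\<bar>" by simp
      then have "e * (- b y) \<le> e * \<bar>b y\<bar>" using e by (intro mult_left_mono) auto
      then show ?thesis by simp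
    qed
    ultimately show ?thesis using ab[OF that] by linarith
  qed
  have QWpos: "a y > 0" if "y \<in> out_alph l" "a y + e * b y > 0" for y
  proof (rule ccontr)
    assume "\<not> a y > 0"
    then have "a y = 0" using ab[OF that(1)] by simp
    then have "b y = 0" using ab[OF that(1)] by simp
    then show False using that(2) \<open>a y = 0\<close> by simp
  qed
  define Dout where "Dout = (\<Sum>y\<in>out_alph l. phi (a y + e * b y) (a y))"
  have KLout: "KL (out_alph l) (\<lambda>y. a y + e * b y) a = ereal Dout"
    unfolding Dout_def by (rule KL_eq) (use bf(4) PWnn QWpos in auto)
  have "Dout \<ge> (\<Sum>y\<in>out_alph l. e * b y + e^2*(1/2 - e/3)*((b y)^2 / a y))"
    unfolding Dout_def by (rule sum_mono) (use termT ab e in auto)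
  also have "(\<Sum>y\<in>out_alph l. e * b y + e^2*(1/2 - e/3)*((b y)^2 / a y))
     = e * (\<Sum>y\<in>out_alph l. b y) + e^2*(1/2 - e/3) * (\<Sum>y\<in>out_alph l. (b y)^2 / a y)"
    by (simp add: sum.distrib sum_distrib_left)
  also have "(\<Sum>y\<in>out_alph l. b y) = 0"
    unfolding out_alph_def sum_sym by (simp add: b_def)
  also have "(\<Sum>y\<in>out_alph l. (b y)^2 / a y) = 4 * S"
  proof -
    have "(\<Sum>y\<in>out_alph l. (b y)^2 / a y) = (\<Sum>y\<in>{1..int l}. (b y)^2 / a y + (b (-y))^2 / a (-y))"
      unfolding out_alph_def sum_sym by (simp add: b_def)
    also have "\<dots> = (\<Sum>y\<in>{1..int l}. 4 * ((p y - p (- y))^2 / (p y + p (- y))))"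
      by (rule sum.cong) (auto simp: a_def b_def power2_commute add.commute)
    finally show ?thesis unfolding S_def by (simp add: sum_distrib_left)
  qed
  finally have Dout_low: "Dout \<ge> e^2*(1/2 - e/3) * (4 * S)" by simp
  have S0: "S \<ge> 0" unfolding S_def
    by (rule sum_nonneg) (use bf(1) bf(2) bf(3) in \<open>auto intro!: divide_nonneg_nonneg\<close>)
  have key: "(1 - 2*e) * (t^2/2 + t^4/3) \<le> 4 * e^2 * (1/2 - e/3)"
  proof -
    have "4 * e^2 * (1/2 - e/3) - (1 - 2*e) * (t^2/2 + t^4/3) = (8*e^3/3) * (1 - 2*e + 4*e^2)"
      unfolding t_def by (simp add: field_simps power2_eq_square power3_eq_cube power4_eq_xxxx)
    moreover have "1 - 2*e + 4*e^2 \<ge> 0"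
    proof -
      have "e^2 \<ge> 0" by simp
      then show ?thesis using e by linarith
    qed
    moreover have "e^3 \<ge> 0" using e by simp
    ultimately have "(8*e^3/3) * (1 - 2*e + 4*e^2) \<ge> 0" by simp
    with \<open>4 * e^2 * (1/2 - e/3) - (1 - 2*e) * (t^2/2 + t^4/3) = (8*e^3/3) * (1 - 2*e + 4*e^2)\<close>
    show ?thesis by linarith
  qed
  have "S * (1 - 2*e) * Din \<le> S * (1 - 2*e) * (t^2/2 + t^4/3)"
    using Dup S0 e by (intro mult_left_mono) auto
  also have "\<dots> = S * ((1 - 2*e) * (t^2/2 + t^4/3))" by simp
  also have "\<dots> \<le> S * (4 * e^2 * (1/2 - e/3))" using key S0 by (intro mult_left_mono) auto
  also have "\<dots> \<le> Dout" using Dout_low by (simp add: algebra_simps)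
  finally have "S * (1 - 2*e) \<le> Dout / Din" using Dpos by (simp add: pos_le_divide_eq)
  then have "ereal (S * (1 - 2*e)) \<le> KL (out_alph l) (out_dist (biso_W p) PX) (out_dist (biso_W p) QX) / KL in_alph PX QX"
    unfolding odP odQ KLout KLin using Dpos by simp
  also have "\<dots> \<le> eta_KL l (biso_W p)"
    unfolding eta_KL_def
    by (rule Sup_upper, intro CollectI exI[of _ PX] exI[of _ QX] conjI refl dP dQ) (use KLin Dpos in auto)
  finally show ?thesis unfolding S_def .
qed


theorem mainTheorem1:
  fixes l :: nat and p :: "int \<Rightarrow> real"
  assumes "is_biso l p"
  shows "eta_KL l (biso_W p) =
    ereal (\<Sum>y\<in>{1..int l}. (p y - p (- y))^2 / (p y + p (- y)))"
proof -
  define S where "S = (\<Sum>y\<in>{1..int l}. (p y - p (- y))^2 / (p y + p (- y)))"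
  have up: "eta_KL l (biso_W p) \<le> ereal S"
    unfolding eta_KL_def
  proof (rule Sup_least)
    fix z assume "z \<in> {KL (out_alph l) (out_dist (biso_W p) PX) (out_dist (biso_W p) QX) / KL in_alph PX QX
      | PX QX. is_dist in_alph PX \<and> is_dist in_alph QX
              \<and> 0 < KL in_alph PX QX \<and> KL in_alph PX QX < \<infinity>}"
    then obtain PX QX where z: "z = KL (out_alph l) (out_dist (biso_W p) PX) (out_dist (biso_W p) QX) / KL in_alph PX QX"
      and h: "is_dist in_alph PX" "is_dist in_alph QX" "0 < KL in_alph PX QX" "KL in_alph PX QX < \<infinity>"
      by blast
    show "z \<le> ereal S" unfolding z S_def by (rule upper[OF assms h])
  qed
  have lim: "((\<lambda>e. ereal (S * (1 - 2*e))) \<longlongrightarrow> ereal S) (at_right 0)"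
  proof -
    have "((\<lambda>e::real. S * (1 - 2*e)) \<longlongrightarrow> S * (1 - 2*0)) (at_right 0)"
      by (intro tendsto_intros)
    then show ?thesis by simp
  qed
  have ev: "eventually (\<lambda>e. ereal (S * (1 - 2*e)) \<le> eta_KL l (biso_W p)) (at_right 0)"
    unfolding eventually_at_right_field
    by (rule exI[of _ "1/4"]) (use lower[OF assms] in \<open>auto simp: S_def\<close>)
  have lo: "ereal S \<le> eta_KL l (biso_W p)"
    by (rule tendsto_upperbound[OF lim ev]) simp
  show ?thesis using up lo unfolding S_def by (rule antisym)
qed

end
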